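(* Let $n\in\mathbb{N}$ and $\mu=\sum_{i=1}^n\mu_i$, where the $\mu_i$ are non-negative measures on $\mathbb{R}$ with $\mu_i(\mathbb{R})=a_i>0$ and $\sum_{i=1}^na_i=1$. Let $\nu$ be a probability measure on $\mathbb{R}$ with $H(\nu)<\infty$, and let $\nu_t=D_t^*(\nu)$. Then $$\liminf_{t\to0}\frac{H(\mu*\nu_t)}{|\log t|}=\liminf_{t\to0}\frac{1}{|\log t|}\sum_{i=1}^na_iH(a_i^{-1}\mu_i*\nu_t).$$
   Context: For $t>0$, $D_t:\mathbb{R}\to\mathbb{R}$ is $x\mapsto tx$, and $D_t^*$ denotes push-forward by $D_t$. For non-negative measurable $q$, $H(q(x)\,dx)=\int q\log q\,dx$. In particular $H(\nu)<\infty$ presupposes that $\nu$ is Lebesgue absolutely continuous. *)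

theory Defs
  imports "HOL-Probability.Probability"
begin

definition dilate :: "real \<Rightarrow> real measure \<Rightarrow> real measure" where
  "dilate t M = distr M borel (\<lambda>x. t * x)"

definition sum_meas :: "(nat \<Rightarrow> real measure) \<Rightarrow> nat set \<Rightarrow> real measure" where
  "sum_meas M I = measure_of UNIV (sets borel) (\<lambda>A. \<Sum>i\<in>I. emeasure (M i) A)"

text \<open>Entropy H(q(x) dx) = integral of q log q, with q the Lebesgue density
  (Radon-Nikodym derivative) of the measure, valued in the extended reals:
  positive part minus negative part.\<close>
definition entropy_H :: "real measure \<Rightarrow> ereal" where
  "entropy_H M = (let q = (\<lambda>x. enn2real (RN_deriv lborel M x)) in
     enn2ereal (\<integral>\<^sup>+x. ennreal (q x * ln (q x)) \<partial>lborel)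
       - enn2ereal (\<integral>\<^sup>+x. ennreal (- (q x * ln (q x))) \<partial>lborel))"

end

theory Submission
  imports Defs
begin

lemma dilate_density:
  fixes G :: "real \<Rightarrow> ennreal" and t :: real
  assumes [measurable]: "G \<in> borel_measurable borel" and t: "t > 0"
  shows "distr (density lborel G) borel (\<lambda>x. t * x) = density lborel (\<lambda>x. G (x / t) * ennreal (1/t))"
proof (rule measure_eqI)
  fix A assume A: "A \<in> sets (distr (density lborel G) borel (\<lambda>x. t * x))"
  hence [measurable]: "A \<in> sets borel" by simp
  have "emeasure (distr (density lborel G) borel (\<lambda>x. t * x)) A = (\<integral>\<^sup>+x. G x * indicator A (t * x) \<partial>lborel)"
  proof -
    have [measurable]: "(\<lambda>x. t * x) -` A \<in> sets borel"
      using measurable_sets[of "\<lambda>x. t*x" borel borel A] by simp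
    show ?thesis by (subst emeasure_distr) (auto simp: emeasure_density intro!: nn_integral_cong split: split_indicator)
  qed
  also have "\<dots> = ennreal t * (\<integral>\<^sup>+x. G x * ennreal (1/t) * indicator A (t * x) \<partial>lborel)"
  proof -
    have tt: "ennreal t * ennreal (1/t) = 1" using t by (simp add: ennreal_mult[symmetric])
    have e: "ennreal t * (a * (ennreal (1/t) * b)) = a * b" for a b :: ennreal
    proof -
      have "ennreal t * (a * (ennreal (1/t) * b)) = (ennreal t * ennreal (1/t)) * (a * b)" by (simp add: ac_simps)
      then show ?thesis using tt by simp
    qed
    show ?thesis using t by (subst nn_integral_cmult[symmetric]) (auto intro!: nn_integral_cong simp: e mult.assoc)
  qed
  also have "\<dots> = (\<integral>\<^sup>+y. G (y/t) * ennreal (1/t) * indicator A y \<partial>lborel)"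
    using nn_integral_real_affine[of "\<lambda>y. G (y/t) * ennreal (1/t) * indicator A y" t 0] t
    by simp
  also have "\<dots> = emeasure (density lborel (\<lambda>x. G (x / t) * ennreal (1/t))) A"
    by (simp add: emeasure_density)
  finally show "emeasure (distr (density lborel G) borel (\<lambda>x. t * x)) A = emeasure (density lborel (\<lambda>x. G (x / t) * ennreal (1/t))) A" .
qed simp

lemma conv_density:
  fixes M :: "real measure" and G :: "real \<Rightarrow> ennreal"
  assumes M: "finite_measure M" and Ms[measurable_cong]: "sets M = sets borel"
    and [measurable]: "G \<in> borel_measurable borel"
    and fin: "finite_measure (density lborel G)"
  shows "M \<star> density lborel G = density lborel (\<lambda>z. \<integral>\<^sup>+x. G (z - x) \<partial>M)"
proof -
  interpret M: finite_measure M by fact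
  interpret pair_sigma_finite M lborel
    by (simp add: M.sigma_finite_measure_axioms lborel.sigma_finite_measure_axioms pair_sigma_finite_def)
  have meas[measurable]: "(\<lambda>z. \<integral>\<^sup>+x. G (z - x) \<partial>M) \<in> borel_measurable borel"
    by measurable
  show ?thesis
  proof (rule measure_eqI)
    show "sets (M \<star> density lborel G) = sets (density lborel (\<lambda>z. \<integral>\<^sup>+x. G (z - x) \<partial>M))"
      by (simp add: convolution_def)
    fix A assume "A \<in> sets (M \<star> density lborel G)"
    hence [measurable]: "A \<in> sets borel" by (simp add: convolution_def)
    have "emeasure (M \<star> density lborel G) A = (\<integral>\<^sup>+x. \<integral>\<^sup>+y. indicator A (x+y) \<partial>density lborel G \<partial>M)"
      by (rule convolution_emeasure') (simp_all add: M fin Ms)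
    also have "\<dots> = (\<integral>\<^sup>+x. \<integral>\<^sup>+y. G y * indicator A (x + y) \<partial>lborel \<partial>M)"
      by (intro nn_integral_cong) (simp add: nn_integral_density)
    also have "\<dots> = (\<integral>\<^sup>+x. \<integral>\<^sup>+z. G (z - x) * indicator A z \<partial>lborel \<partial>M)"
    proof (rule nn_integral_cong)
      fix x assume "x \<in> space M"
      show "(\<integral>\<^sup>+y. G y * indicator A (x + y) \<partial>lborel) = (\<integral>\<^sup>+z. G (z - x) * indicator A z \<partial>lborel)"
        using nn_integral_real_affine[of "\<lambda>y. G y * indicator A (x + y)" 1 "-x"] by simp
    qed
    also have "\<dots> = (\<integral>\<^sup>+z. \<integral>\<^sup>+x. G (z - x) * indicator A z \<partial>M \<partial>lborel)"
    proof -
      have "case_prod (\<lambda>x z. G (z - x) * indicator A z) \<in> borel_measurable (M \<Otimes>\<^sub>M lborel)"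
        by measurable
      from Fubini'[OF this] show ?thesis by simp
    qed
    also have "\<dots> = (\<integral>\<^sup>+z. (\<integral>\<^sup>+x. G (z - x) \<partial>M) * indicator A z \<partial>lborel)"
      by (intro nn_integral_cong) (simp add: nn_integral_multc)
    also have "\<dots> = emeasure (density lborel (\<lambda>z. \<integral>\<^sup>+x. G (z - x) \<partial>M)) A"
      by (simp add: emeasure_density)
    finally show "emeasure (M \<star> density lborel G) A = emeasure (density lborel (\<lambda>z. \<integral>\<^sup>+x. G (z - x) \<partial>M)) A" .
  qed
qed

lemma sum_meas_sets[simp]: "sets (sum_meas M I) = sets borel"
  unfolding sum_meas_def using sets.sigma_sets_eq[of borel] by (simp add: sets_measure_of_conv)

lemma sum_meas_space[simp]: "space (sum_meas M I) = UNIV"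
  unfolding sum_meas_def by (simp add: space_measure_of_conv)

lemma sum_meas_emeasure:
  assumes I: "finite I" and Ms: "\<And>i. i \<in> I \<Longrightarrow> sets (M i) = sets borel" and A: "A \<in> sets borel"
  shows "emeasure (sum_meas M I) A = (\<Sum>i\<in>I. emeasure (M i) A)"
  unfolding sum_meas_def
proof (rule emeasure_measure_of_sigma[OF _ _ _ A])
  show "sigma_algebra UNIV (sets borel)"
    using sets.sigma_algebra_axioms[of borel] by simp
  show "positive (sets borel) (\<lambda>A. \<Sum>i\<in>I. emeasure (M i) A)"
    unfolding positive_def by simp
  show "countably_additive (sets borel) (\<lambda>A. \<Sum>i\<in>I. emeasure (M i) A)"
    unfolding countably_additive_def
  proof (intro allI impI)
    fix F :: "nat \<Rightarrow> real set"
    assume F: "range F \<subseteq> sets borel" "disjoint_family F" "\<Union> (range F) \<in> sets borel"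
    have "(\<Sum>n. \<Sum>i\<in>I. emeasure (M i) (F n)) = (\<Sum>i\<in>I. \<Sum>n. emeasure (M i) (F n))"
      by (rule suminf_sum[OF summableI])
    also have "\<dots> = (\<Sum>i\<in>I. emeasure (M i) (\<Union> (range F)))"
      using F Ms by (intro sum.cong refl suminf_emeasure) auto
    finally show "(\<Sum>n. \<Sum>i\<in>I. emeasure (M i) (F n)) = (\<Sum>i\<in>I. emeasure (M i) (\<Union> (range F)))" .
  qed
qed

lemma nn_integral_sum_meas:
  assumes I: "finite I" and Ms: "\<And>i. i \<in> I \<Longrightarrow> sets (M i) = sets borel"
    and f: "f \<in> borel_measurable borel"
  shows "(\<integral>\<^sup>+x. f x \<partial>sum_meas M I) = (\<Sum>i\<in>I. \<integral>\<^sup>+x. f x \<partial>M i)"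
proof -
  have sp: "space (M i) = UNIV" if "i \<in> I" for i
    using sets_eq_imp_space_eq[OF Ms[OF that]] by simp
  have mi: "g \<in> borel_measurable (M i)" if "i \<in> I" "g \<in> borel_measurable (sum_meas M I)" for i g
  proof -
    have "borel_measurable (M i) = borel_measurable (sum_meas M I)"
      by (rule measurable_cong_sets) (simp_all add: Ms that)
    with that(2) show ?thesis by blast
  qed
  from f have "f \<in> borel_measurable (sum_meas M I)"
    using measurable_cong_sets[of "sum_meas M I" borel borel borel] by force
  then show ?thesis
  proof induction
    case (cong f g)
    have "f = g" using cong.hyps(3) by auto
    then show ?case using cong.prems cong.IH cong.hyps by simp
  next
    case (set A)
    then show ?case using I Ms sp by (simp add: sum_meas_emeasure)
  next
    case (mult f c)
    have "(\<Sum>i\<in>I. \<integral>\<^sup>+x. c * f x \<partial>M i) = (\<Sum>i\<in>I. c * \<integral>\<^sup>+x. f x \<partial>M i)"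
      by (intro sum.cong refl nn_integral_cmult mi mult.hyps)
    then show ?case using mult by (simp add: nn_integral_cmult sum_distrib_left)
  next
    case (add f g)
    have "(\<Sum>i\<in>I. \<integral>\<^sup>+x. g x + f x \<partial>M i) = (\<Sum>i\<in>I. (\<integral>\<^sup>+x. g x \<partial>M i) + \<integral>\<^sup>+x. f x \<partial>M i)"
      by (intro sum.cong refl nn_integral_add mi add.hyps)
    then show ?case using add by (simp add: nn_integral_add sum.distrib)
  next
    case (seq U)
    have "(\<integral>\<^sup>+x. (SUP i. U i x) \<partial>sum_meas M I) = (SUP n. \<integral>\<^sup>+x. U n x \<partial>sum_meas M I)"
      using seq by (intro nn_integral_monotone_convergence_SUP) auto
    also have "\<dots> = (SUP n. \<Sum>i\<in>I. \<integral>\<^sup>+x. U n x \<partial>M i)" using seq by simp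
    also have "\<dots> = (\<Sum>i\<in>I. SUP n. \<integral>\<^sup>+x. U n x \<partial>M i)"
      using seq mi by (intro ennreal_SUP_sum) (auto simp: incseq_def le_fun_def intro!: nn_integral_mono)
    also have "\<dots> = (\<Sum>i\<in>I. \<integral>\<^sup>+x. (SUP n. U n x) \<partial>M i)"
      using seq by (intro sum.cong refl nn_integral_monotone_convergence_SUP[symmetric]) (auto intro: mi)
    finally show ?case by (simp add: image_comp)
  qed
qed

lemma tangent_ln:
  fixes u v :: real
  assumes u: "0 \<le> u" and v: "0 < v"
  shows "v * ln v + (1 + ln v) * (u - v) \<le> u * ln u"
proof (cases "u = 0")
  case True
  then show ?thesis using v by (simp add: algebra_simps)
next
  case False
  with u have u': "u > 0" by simp
  have "ln (v/u) \<le> v/u - 1" using u' v by (intro ln_le_minus_one) simp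
  hence "u * ln (v/u) \<le> u * (v/u - 1)" using u' by (simp add: mult_left_mono)
  hence "u * (ln v - ln u) \<le> v - u" using u' v by (simp add: ln_div right_diff_distrib)
  then show ?thesis by (simp add: algebra_simps)
qed

lemma mix_upper_pt:
  fixes a p :: "nat \<Rightarrow> real"
  assumes I: "finite I" and a: "\<And>i. i \<in> I \<Longrightarrow> 0 \<le> a i" and asum: "(\<Sum>i\<in>I. a i) = 1"
    and p: "\<And>i. i \<in> I \<Longrightarrow> 0 \<le> p i"
  shows "(\<Sum>i\<in>I. a i * p i) * ln (\<Sum>i\<in>I. a i * p i) \<le> (\<Sum>i\<in>I. a i * (p i * ln (p i)))"
proof -
  define q where "q = (\<Sum>i\<in>I. a i * p i)"
  have q0: "q \<ge> 0" unfolding q_def using a p by (intro sum_nonneg) simp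
  show ?thesis
  proof (cases "q = 0")
    case True
    then have "\<forall>i\<in>I. a i * p i = 0" unfolding q_def using I a p by (subst sum_nonneg_eq_0_iff[symmetric]) auto
    then have "(\<Sum>i\<in>I. a i * (p i * ln (p i))) = 0" by (intro sum.neutral) auto
    then show ?thesis using True q_def by simp
  next
    case False
    with q0 have qp: "q > 0" by simp
    have "(\<Sum>i\<in>I. a i * (q * ln q + (1 + ln q) * (p i - q))) \<le> (\<Sum>i\<in>I. a i * (p i * ln (p i)))"
      using a p qp by (intro sum_mono mult_left_mono tangent_ln) auto
    moreover have "(\<Sum>i\<in>I. a i * (q * ln q + (1 + ln q) * (p i - q)))
        = (q * ln q - (1 + ln q) * q) * (\<Sum>i\<in>I. a i) + (1 + ln q) * (\<Sum>i\<in>I. a i * p i)"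
      by (simp add: algebra_simps sum.distrib sum_distrib_left sum_subtractf sum_negf)
    ultimately show ?thesis using asum q_def by (simp add: algebra_simps)
  qed
qed

lemma mix_lower_pt:
  fixes a p :: "nat \<Rightarrow> real"
  assumes I: "finite I" and a: "\<And>i. i \<in> I \<Longrightarrow> 0 < a i"
    and p: "\<And>i. i \<in> I \<Longrightarrow> 0 \<le> p i"
  shows "(\<Sum>i\<in>I. a i * (p i * ln (p i))) + (\<Sum>i\<in>I. a i * ln (a i) * p i)
     \<le> (\<Sum>i\<in>I. a i * p i) * ln (\<Sum>i\<in>I. a i * p i)"
proof -
  define q where "q = (\<Sum>i\<in>I. a i * p i)"
  have le: "a i * p i \<le> q" if "i \<in> I" for i
    unfolding q_def using I that a p by (intro member_le_sum mult_nonneg_nonneg) (auto intro: less_imp_le)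
  have "(\<Sum>i\<in>I. a i * (p i * ln (p i))) + (\<Sum>i\<in>I. a i * ln (a i) * p i)
      = (\<Sum>i\<in>I. a i * p i * ln (a i * p i))"
    unfolding sum.distrib[symmetric]
  proof (intro sum.cong refl)
    fix i assume i: "i \<in> I"
    show "a i * (p i * ln (p i)) + a i * ln (a i) * p i = a i * p i * ln (a i * p i)"
    proof (cases "p i = 0")
      case False
      with p i have "p i > 0" by (simp add: less_le)
      then show ?thesis using a i by (simp add: ln_mult algebra_simps)
    qed simp
  qed
  also have "\<dots> \<le> (\<Sum>i\<in>I. a i * p i * ln q)"
  proof (intro sum_mono)
    fix i assume i: "i \<in> I"
    show "a i * p i * ln (a i * p i) \<le> a i * p i * ln q"
    proof (cases "p i = 0")
      case False
      with p i have "a i * p i > 0" using a by (simp add: less_le)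
      then show ?thesis using le[OF i] by (intro mult_left_mono) auto
    qed simp
  qed
  also have "\<dots> = q * ln q" unfolding q_def by (simp add: sum_distrib_right)
  finally show ?thesis unfolding q_def .
qed

lemma psi_tangent:
  fixes u v :: real
  assumes u: "0 \<le> u" and v: "0 \<le> v"
  shows "max 0 (v * ln v) + (if 1 < v then 1 + ln v else 0) * u \<le> max 0 (u * ln u) + (if 1 < v then 1 + ln v else 0) * v"
proof (cases "1 < v")
  case True
  then show ?thesis using tangent_ln[OF u, of v] by (simp add: algebra_simps)
next
  case False
  then have "v * ln v \<le> 0" using v by (cases "v = 0") (auto intro!: mult_nonneg_nonpos)
  then show ?thesis using False by simp
qed

lemma jensen_psi:
  fixes M :: "'a measure" and X :: "'a \<Rightarrow> real"
  assumes M1: "emeasure M (space M) = 1" and Xm[measurable]: "X \<in> borel_measurable M"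
    and X0: "\<And>y. 0 \<le> X y" and Xint: "(\<integral>\<^sup>+y. ennreal (X y) \<partial>M) = ennreal v" and v0: "0 \<le> v"
  shows "ennreal (v * ln v) \<le> (\<integral>\<^sup>+y. ennreal (X y * ln (X y)) \<partial>M)"
proof -
  define S where "S = (if 1 < v then 1 + ln v else 0)"
  have S0: "S \<ge> 0" unfolding S_def by auto
  have "ennreal (max 0 (v * ln v)) + ennreal (S * v)
      = (\<integral>\<^sup>+y. ennreal (max 0 (v * ln v)) + ennreal S * ennreal (X y) \<partial>M)"
    using M1 S0 v0 by (simp add: nn_integral_add nn_integral_cmult Xint ennreal_mult)
  also have "\<dots> \<le> (\<integral>\<^sup>+y. ennreal (max 0 (X y * ln (X y))) + ennreal (S * v) \<partial>M)"
  proof (intro nn_integral_mono)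
    fix y
    have "ennreal (max 0 (v * ln v)) + ennreal S * ennreal (X y) = ennreal (max 0 (v * ln v) + S * X y)"
      using S0 X0[of y] by (simp add: ennreal_mult)
    also have "\<dots> \<le> ennreal (max 0 (X y * ln (X y)) + S * v)"
      using psi_tangent[OF X0[of y] v0] unfolding S_def by (intro ennreal_leI) simp
    also have "\<dots> = ennreal (max 0 (X y * ln (X y))) + ennreal (S * v)"
      using S0 v0 by simp
    finally show "ennreal (max 0 (v * ln v)) + ennreal S * ennreal (X y) \<le> ennreal (max 0 (X y * ln (X y))) + ennreal (S * v)" .
  qed
  also have "\<dots> = (\<integral>\<^sup>+y. ennreal (X y * ln (X y)) \<partial>M) + ennreal (S * v)"
    using M1 by (simp add: nn_integral_add ennreal_max_0)
  finally have "ennreal (max 0 (v * ln v)) + ennreal (S * v) \<le> (\<integral>\<^sup>+y. ennreal (X y * ln (X y)) \<partial>M) + ennreal (S * v)" .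
  then show ?thesis
    by (simp add: ennreal_max_0 add.commute[of _ "ennreal (S * v)"] ennreal_add_left_cancel_le)
qed

definition Pp :: "(real \<Rightarrow> real) \<Rightarrow> ennreal" where
  "Pp r = (\<integral>\<^sup>+x. ennreal (r x * ln (r x)) \<partial>lborel)"
definition Nn :: "(real \<Rightarrow> real) \<Rightarrow> ennreal" where
  "Nn r = (\<integral>\<^sup>+x. ennreal (- (r x * ln (r x))) \<partial>lborel)"
definition Ent :: "(real \<Rightarrow> real) \<Rightarrow> ereal" where
  "Ent r = enn2ereal (Pp r) - enn2ereal (Nn r)"

lemma entropy_density:
  assumes hm[measurable]: "h \<in> borel_measurable borel"
  shows "entropy_H (density lborel h) = Ent (\<lambda>x. enn2real (h x))"
proof -
  have "AE x in lborel. h x = RN_deriv lborel (density lborel h) x"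
    by (rule sigma_finite_measure.RN_deriv_unique[OF lborel.sigma_finite_measure_axioms]) auto
  then have "AE x in lborel. enn2real (RN_deriv lborel (density lborel h) x) = enn2real (h x)"
    by eventually_elim simp
  then have e1: "(\<integral>\<^sup>+x. ennreal (enn2real (RN_deriv lborel (density lborel h) x) * ln (enn2real (RN_deriv lborel (density lborel h) x))) \<partial>lborel) = Pp (\<lambda>x. enn2real (h x))"
    and e2: "(\<integral>\<^sup>+x. ennreal (- (enn2real (RN_deriv lborel (density lborel h) x) * ln (enn2real (RN_deriv lborel (density lborel h) x)))) \<partial>lborel) = Nn (\<lambda>x. enn2real (h x))"
    unfolding Pp_def Nn_def by (auto intro!: nn_integral_cong_AE elim!: eventually_mono)
  show ?thesis unfolding entropy_H_def Let_def Ent_def e1 e2 ..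
qed

lemma sum_ennreal_mult:
  fixes a y :: "nat \<Rightarrow> real"
  assumes a: "\<And>i. i \<in> I \<Longrightarrow> 0 \<le> a i"
  shows "(\<Sum>i\<in>I. ennreal (a i) * ennreal (y i)) = ennreal (\<Sum>i\<in>I. a i * max 0 (y i))"
proof -
  have "(\<Sum>i\<in>I. ennreal (a i) * ennreal (y i)) = (\<Sum>i\<in>I. ennreal (a i * max 0 (y i)))"
  proof (intro sum.cong refl)
    fix i assume "i \<in> I"
    then have "ennreal (a i * max 0 (y i)) = ennreal (a i) * ennreal (max 0 (y i))"
      using a by (intro ennreal_mult) auto
    then show "ennreal (a i) * ennreal (y i) = ennreal (a i * max 0 (y i))"
      by (simp add: ennreal_max_0)
  qed
  also have "\<dots> = ennreal (\<Sum>i\<in>I. a i * max 0 (y i))"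
    using a by (intro sum_ennreal) simp
  finally show ?thesis .
qed

lemma sum_pos_neg:
  fixes a y :: "nat \<Rightarrow> real"
  shows "(\<Sum>i\<in>I. a i * max 0 (y i)) - (\<Sum>i\<in>I. a i * max 0 (- y i)) = (\<Sum>i\<in>I. a i * y i)"
  unfolding sum_subtractf[symmetric] by (intro sum.cong refl) (simp add: max_def algebra_simps)

lemma sum_max_nonneg:
  fixes a y :: "nat \<Rightarrow> real"
  assumes a: "\<And>i. i \<in> I \<Longrightarrow> 0 \<le> a i"
  shows "0 \<le> (\<Sum>i\<in>I. a i * max 0 (y i))"
  using a by (intro sum_nonneg) simp

lemma conv_ineq1:
  fixes u :: real and a y :: "nat \<Rightarrow> real"
  assumes a: "\<And>i. i \<in> I \<Longrightarrow> 0 \<le> a i" and le: "u \<le> (\<Sum>i\<in>I. a i * y i)"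
  shows "ennreal u + (\<Sum>i\<in>I. ennreal (a i) * ennreal (- y i)) \<le> ennreal (-u) + (\<Sum>i\<in>I. ennreal (a i) * ennreal (y i))"
proof -
  have n1: "0 \<le> (\<Sum>i\<in>I. a i * max 0 (y i))" "0 \<le> (\<Sum>i\<in>I. a i * max 0 (- y i))"
    using sum_max_nonneg[OF a] by auto
  have "ennreal u + (\<Sum>i\<in>I. ennreal (a i) * ennreal (- y i)) = ennreal (max 0 u + (\<Sum>i\<in>I. a i * max 0 (- y i)))"
    using n1 by (simp add: sum_ennreal_mult[OF a] ennreal_max_0)
  also have "\<dots> \<le> ennreal (max 0 (-u) + (\<Sum>i\<in>I. a i * max 0 (y i)))"
  proof (intro ennreal_leI)
    have "max 0 u - max 0 (-u) = u" by (simp add: max_def)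
    then show "max 0 u + (\<Sum>i\<in>I. a i * max 0 (- y i)) \<le> max 0 (-u) + (\<Sum>i\<in>I. a i * max 0 (y i))" using le sum_pos_neg[of a y I] by linarith
  qed
  also have "\<dots> = ennreal (-u) + (\<Sum>i\<in>I. ennreal (a i) * ennreal (y i))"
    using n1 by (simp add: sum_ennreal_mult[OF a] ennreal_max_0)
  finally show ?thesis .
qed

lemma conv_ineq2:
  fixes u :: real and a y b :: "nat \<Rightarrow> real"
  assumes a: "\<And>i. i \<in> I \<Longrightarrow> 0 \<le> a i" and b: "\<And>i. i \<in> I \<Longrightarrow> 0 \<le> b i"
    and le: "(\<Sum>i\<in>I. a i * y i) \<le> u + (\<Sum>i\<in>I. b i)"
  shows "ennreal (-u) + (\<Sum>i\<in>I. ennreal (a i) * ennreal (y i)) \<le> ennreal u + (\<Sum>i\<in>I. ennreal (a i) * ennreal (- y i)) + (\<Sum>i\<in>I. ennreal (b i))"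
proof -
  have n1: "0 \<le> (\<Sum>i\<in>I. a i * max 0 (y i))" "0 \<le> (\<Sum>i\<in>I. a i * max 0 (- y i))" "0 \<le> (\<Sum>i\<in>I. b i)"
    using sum_max_nonneg[OF a] b by (auto intro: sum_nonneg)
  have "ennreal (-u) + (\<Sum>i\<in>I. ennreal (a i) * ennreal (y i)) = ennreal (max 0 (-u) + (\<Sum>i\<in>I. a i * max 0 (y i)))"
    using n1 by (simp add: sum_ennreal_mult[OF a] ennreal_max_0)
  also have "\<dots> \<le> ennreal (max 0 u + (\<Sum>i\<in>I. a i * max 0 (- y i)) + (\<Sum>i\<in>I. b i))"
  proof (intro ennreal_leI)
    have "max 0 u - max 0 (-u) = u" by (simp add: max_def)
    then show "max 0 (-u) + (\<Sum>i\<in>I. a i * max 0 (y i)) \<le> max 0 u + (\<Sum>i\<in>I. a i * max 0 (- y i)) + (\<Sum>i\<in>I. b i)" using le sum_pos_neg[of a y I] by linarith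
  qed
  also have "\<dots> = ennreal u + (\<Sum>i\<in>I. ennreal (a i) * ennreal (- y i)) + (\<Sum>i\<in>I. ennreal (b i))"
    using n1 b by (simp add: sum_ennreal_mult[OF a] ennreal_max_0)
  finally show ?thesis .
qed

lemma conv_ineq3:
  fixes u :: real and a y :: "nat \<Rightarrow> real"
  assumes a: "\<And>i. i \<in> I \<Longrightarrow> 0 \<le> a i" and le: "u \<le> (\<Sum>i\<in>I. a i * y i)"
  shows "ennreal u \<le> (\<Sum>i\<in>I. ennreal (a i) * ennreal (y i))"
proof -
  have "(\<Sum>i\<in>I. a i * y i) \<le> (\<Sum>i\<in>I. a i * max 0 (y i))"
    using a by (intro sum_mono mult_left_mono) auto
  then show ?thesis using le by (subst sum_ennreal_mult[OF a]) (auto intro!: ennreal_leI)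
qed

lemma ereal_sum_minf:
  fixes f :: "nat \<Rightarrow> ereal"
  assumes I: "finite I" and i: "i \<in> I" and fi: "f i = -\<infinity>" and nf: "\<And>j. j \<in> I \<Longrightarrow> f j \<noteq> \<infinity>"
  shows "sum f I = -\<infinity>"
proof -
  have "sum f I = f i + sum f (I - {i})" using I i by (simp add: sum.remove)
  moreover have "sum f (I - {i}) \<noteq> \<infinity>" using nf by (auto simp: sum_Pinfty)
  ultimately show ?thesis using fi by simp
qed

lemma integ_combo:
  fixes f :: "real \<Rightarrow> ennreal" and g :: "nat \<Rightarrow> real \<Rightarrow> ennreal"
  assumes I: "finite I" and fm: "f \<in> borel_measurable borel" and gm: "\<And>i. i \<in> I \<Longrightarrow> g i \<in> borel_measurable borel"
  shows "(\<integral>\<^sup>+x. f x + (\<Sum>i\<in>I. c i * g i x) \<partial>lborel) = (\<integral>\<^sup>+x. f x \<partial>lborel) + (\<Sum>i\<in>I. c i * (\<integral>\<^sup>+x. g i x \<partial>lborel))"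
proof -
  have gm': "(\<lambda>x. c i * g i x) \<in> borel_measurable borel" if "i \<in> I" for i
    using gm[OF that] by measurable
  have "(\<integral>\<^sup>+x. (\<Sum>i\<in>I. c i * g i x) \<partial>lborel) = (\<Sum>i\<in>I. \<integral>\<^sup>+x. c i * g i x \<partial>lborel)"
    by (rule nn_integral_sum) (simp add: gm')
  also have "\<dots> = (\<Sum>i\<in>I. c i * (\<integral>\<^sup>+x. g i x \<partial>lborel))"
    by (intro sum.cong refl nn_integral_cmult) (simp add: gm)
  finally have s: "(\<integral>\<^sup>+x. (\<Sum>i\<in>I. c i * g i x) \<partial>lborel) = (\<Sum>i\<in>I. c i * (\<integral>\<^sup>+x. g i x \<partial>lborel))" .
  have sm: "(\<lambda>x. \<Sum>i\<in>I. c i * g i x) \<in> borel_measurable borel"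
    by (rule borel_measurable_sum) (rule gm')
  show ?thesis by (subst nn_integral_add) (auto simp: fm sm s)
qed

lemma integ_sum:
  fixes g :: "nat \<Rightarrow> real \<Rightarrow> ennreal"
  assumes I: "finite I" and gm: "\<And>i. i \<in> I \<Longrightarrow> g i \<in> borel_measurable borel"
  shows "(\<integral>\<^sup>+x. (\<Sum>i\<in>I. c i * g i x) \<partial>lborel) = (\<Sum>i\<in>I. c i * (\<integral>\<^sup>+x. g i x \<partial>lborel))"
  using integ_combo[OF I _ gm, where f="\<lambda>_. 0"] by simp

lemma mix:
  fixes I :: "nat set" and a :: "nat \<Rightarrow> real" and p :: "nat \<Rightarrow> real \<Rightarrow> real" and q :: "real \<Rightarrow> real"
  assumes I: "finite I" and apos: "\<And>i. i \<in> I \<Longrightarrow> 0 < a i" and asum: "(\<Sum>i\<in>I. a i) = 1"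
    and pm: "\<And>i. i \<in> I \<Longrightarrow> p i \<in> borel_measurable borel" and p0: "\<And>i x. i \<in> I \<Longrightarrow> 0 \<le> p i x"
    and qm[measurable]: "q \<in> borel_measurable borel"
    and qeq: "AE x in lborel. q x = (\<Sum>i\<in>I. a i * p i x)"
    and pint: "\<And>i. i \<in> I \<Longrightarrow> (\<integral>\<^sup>+x. ennreal (p i x) \<partial>lborel) \<le> 1"
    and pfin: "\<And>i. i \<in> I \<Longrightarrow> Pp (p i) < \<infinity>"
  shows "Ent q \<le> (\<Sum>i\<in>I. ereal (a i) * Ent (p i))"
    and "(\<Sum>i\<in>I. ereal (a i) * Ent (p i)) + ereal (\<Sum>i\<in>I. a i * ln (a i)) \<le> Ent q"
proof -
  have a0: "0 \<le> a i" if "i \<in> I" for i using apos[OF that] by simp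
  have a1: "a i \<le> 1" if "i \<in> I" for i
  proof -
    have "a i \<le> (\<Sum>i\<in>I. a i)" using I that a0 by (intro member_le_sum) auto
    then show ?thesis using asum by simp
  qed
  define c where "c i = -(a i * ln (a i))" for i
  have c0: "0 \<le> c i" if "i \<in> I" for i
  proof -
    have "ln (a i) \<le> 0" using apos[OF that] a1[OF that] by simp
    then show ?thesis unfolding c_def using a0[OF that] by (simp add: mult_nonneg_nonpos)
  qed
  have mP: "(\<lambda>x. ennreal (p i x * ln (p i x))) \<in> borel_measurable borel" if "i \<in> I" for i
    using pm[OF that] by measurable
  have mN: "(\<lambda>x. ennreal (- (p i x * ln (p i x)))) \<in> borel_measurable borel" if "i \<in> I" for i
    using pm[OF that] by measurable
  have mp: "(\<lambda>x. ennreal (p i x)) \<in> borel_measurable borel" if "i \<in> I" for i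
    using pm[OF that] by measurable
  have mqP: "(\<lambda>x. ennreal (q x * ln (q x))) \<in> borel_measurable borel" by measurable
  have mqN: "(\<lambda>x. ennreal (- (q x * ln (q x)))) \<in> borel_measurable borel" by measurable
  have sumN: "(\<lambda>x. \<Sum>i\<in>I. ennreal (a i) * ennreal (- (p i x * ln (p i x)))) \<in> borel_measurable borel"
    by (intro borel_measurable_sum borel_measurable_times_ennreal mN) simp
  have sumP: "(\<lambda>x. \<Sum>i\<in>I. ennreal (a i) * ennreal (p i x * ln (p i x))) \<in> borel_measurable borel"
    by (intro borel_measurable_sum borel_measurable_times_ennreal mP) simp

  have ptU: "AE x in lborel. ennreal (q x * ln (q x)) + (\<Sum>i\<in>I. ennreal (a i) * ennreal (- (p i x * ln (p i x))))
      \<le> ennreal (- (q x * ln (q x))) + (\<Sum>i\<in>I. ennreal (a i) * ennreal (p i x * ln (p i x)))"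
    using qeq
  proof eventually_elim
    case (elim x)
    have le: "q x * ln (q x) \<le> (\<Sum>i\<in>I. a i * (p i x * ln (p i x)))"
      using mix_upper_pt[OF I, of a "\<lambda>i. p i x"] a0 asum p0 elim by auto
    show ?case using conv_ineq1[OF a0 le] by simp
  qed
  have ptU3: "AE x in lborel. ennreal (q x * ln (q x)) \<le> (\<Sum>i\<in>I. ennreal (a i) * ennreal (p i x * ln (p i x)))"
    using qeq
  proof eventually_elim
    case (elim x)
    have le: "q x * ln (q x) \<le> (\<Sum>i\<in>I. a i * (p i x * ln (p i x)))"
      using mix_upper_pt[OF I, of a "\<lambda>i. p i x"] a0 asum p0 elim by auto
    show ?case using conv_ineq3[OF a0 le] by simp
  qed
  have ptL: "AE x in lborel. ennreal (- (q x * ln (q x))) + (\<Sum>i\<in>I. ennreal (a i) * ennreal (p i x * ln (p i x)))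
      \<le> ennreal (q x * ln (q x)) + (\<Sum>i\<in>I. ennreal (a i) * ennreal (- (p i x * ln (p i x))))
         + (\<Sum>i\<in>I. ennreal (c i) * ennreal (p i x))"
    using qeq
  proof eventually_elim
    case (elim x)
    have "(\<Sum>i\<in>I. a i * (p i x * ln (p i x))) + (\<Sum>i\<in>I. a i * ln (a i) * p i x) \<le> q x * ln (q x)"
      using mix_lower_pt[OF I, of a "\<lambda>i. p i x"] apos p0 elim by auto
    moreover have "(\<Sum>i\<in>I. a i * ln (a i) * p i x) = - (\<Sum>i\<in>I. c i * p i x)"
      unfolding c_def by (simp add: sum_negf[symmetric])
    ultimately have "(\<Sum>i\<in>I. a i * (p i x * ln (p i x))) \<le> q x * ln (q x) + (\<Sum>i\<in>I. c i * p i x)"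
      by simp
    then have "ennreal (- (q x * ln (q x))) + (\<Sum>i\<in>I. ennreal (a i) * ennreal (p i x * ln (p i x)))
      \<le> ennreal (q x * ln (q x)) + (\<Sum>i\<in>I. ennreal (a i) * ennreal (- (p i x * ln (p i x))))
         + (\<Sum>i\<in>I. ennreal (c i * p i x))"
      using c0 p0 by (intro conv_ineq2[where y="\<lambda>i. p i x * ln (p i x)" and u="q x * ln (q x)" and b="\<lambda>i. c i * p i x", OF a0]) (auto intro: mult_nonneg_nonneg)
    moreover have "(\<Sum>i\<in>I. ennreal (c i * p i x)) = (\<Sum>i\<in>I. ennreal (c i) * ennreal (p i x))"
      using c0 by (intro sum.cong refl ennreal_mult') auto
    ultimately show ?case by simp
  qed

  have IU: "Pp q + (\<Sum>i\<in>I. ennreal (a i) * Nn (p i)) \<le> Nn q + (\<Sum>i\<in>I. ennreal (a i) * Pp (p i))"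
  proof -
    have "Pp q + (\<Sum>i\<in>I. ennreal (a i) * Nn (p i))
        = (\<integral>\<^sup>+x. ennreal (q x * ln (q x)) + (\<Sum>i\<in>I. ennreal (a i) * ennreal (- (p i x * ln (p i x)))) \<partial>lborel)"
      unfolding Pp_def Nn_def by (rule integ_combo[OF I mqP mN, symmetric])
    also have "\<dots> \<le> (\<integral>\<^sup>+x. ennreal (- (q x * ln (q x))) + (\<Sum>i\<in>I. ennreal (a i) * ennreal (p i x * ln (p i x))) \<partial>lborel)"
      by (rule nn_integral_mono_AE[OF ptU])
    also have "\<dots> = Nn q + (\<Sum>i\<in>I. ennreal (a i) * Pp (p i))"
      unfolding Pp_def Nn_def by (rule integ_combo[OF I mqN mP])
    finally show ?thesis .
  qed
  have IU3: "Pp q \<le> (\<Sum>i\<in>I. ennreal (a i) * Pp (p i))"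
  proof -
    have "Pp q \<le> (\<integral>\<^sup>+x. (\<Sum>i\<in>I. ennreal (a i) * ennreal (p i x * ln (p i x))) \<partial>lborel)"
      unfolding Pp_def using ptU3 by (intro nn_integral_mono_AE) auto
    also have "\<dots> = (\<Sum>i\<in>I. ennreal (a i) * Pp (p i))"
      unfolding Pp_def by (rule integ_sum[OF I mP])
    finally show ?thesis .
  qed
  have IL: "Nn q + (\<Sum>i\<in>I. ennreal (a i) * Pp (p i)) \<le> Pp q + (\<Sum>i\<in>I. ennreal (a i) * Nn (p i)) + (\<Sum>i\<in>I. ennreal (c i))"
  proof -
    have "Nn q + (\<Sum>i\<in>I. ennreal (a i) * Pp (p i))
        = (\<integral>\<^sup>+x. ennreal (- (q x * ln (q x))) + (\<Sum>i\<in>I. ennreal (a i) * ennreal (p i x * ln (p i x))) \<partial>lborel)"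
      unfolding Pp_def Nn_def by (rule integ_combo[OF I mqN mP, symmetric])
    also have "\<dots> \<le> (\<integral>\<^sup>+x. (ennreal (q x * ln (q x)) + (\<Sum>i\<in>I. ennreal (a i) * ennreal (- (p i x * ln (p i x)))))
         + (\<Sum>i\<in>I. ennreal (c i) * ennreal (p i x)) \<partial>lborel)"
      by (rule nn_integral_mono_AE[OF ptL])
    also have "\<dots> = (\<integral>\<^sup>+x. ennreal (q x * ln (q x)) + (\<Sum>i\<in>I. ennreal (a i) * ennreal (- (p i x * ln (p i x)))) \<partial>lborel)
         + (\<Sum>i\<in>I. ennreal (c i) * (\<integral>\<^sup>+x. ennreal (p i x) \<partial>lborel))"
      by (rule integ_combo[OF I _ mp]) (intro borel_measurable_add mqP sumN)
    also have "\<dots> = Pp q + (\<Sum>i\<in>I. ennreal (a i) * Nn (p i)) + (\<Sum>i\<in>I. ennreal (c i) * (\<integral>\<^sup>+x. ennreal (p i x) \<partial>lborel))"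
      using integ_combo[OF I mqP mN] unfolding Pp_def Nn_def by (simp only:)
    also have "\<dots> \<le> Pp q + (\<Sum>i\<in>I. ennreal (a i) * Nn (p i)) + (\<Sum>i\<in>I. ennreal (c i))"
      using pint by (intro add_left_mono sum_mono) (auto intro: mult_left_le)
    finally show ?thesis .
  qed
  have Pqfin: "Pp q < \<infinity>"
  proof -
    have "(\<Sum>i\<in>I. ennreal (a i) * Pp (p i)) < \<infinity>"
      using I pfin by (simp add: ennreal_mult_less_top)
    with IU3 show ?thesis by (rule le_less_trans)
  qed
  define pp where "pp i = enn2real (Pp (p i))" for i
  have ppe: "Pp (p i) = ennreal (pp i)" if "i \<in> I" for i
    using pfin[OF that] unfolding pp_def by (simp add: less_top ennreal_enn2real)
  have pp0: "0 \<le> pp i" for i by (simp add: pp_def)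
  obtain pq where pqe: "Pp q = ennreal pq" and pq0: "0 \<le> pq"
    using Pqfin by (auto simp: less_top_ennreal)
  have csum: "(\<Sum>i\<in>I. ennreal (c i)) = ennreal (\<Sum>i\<in>I. c i)"
    using c0 by simp
  have c_sum0: "0 \<le> (\<Sum>i\<in>I. c i)" using c0 by (simp add: sum_nonneg)
  have clnsum: "(\<Sum>i\<in>I. a i * ln (a i)) = - (\<Sum>i\<in>I. c i)"
    unfolding c_def by (simp add: sum_negf)
  have Ent_ne: "Ent (p i) \<noteq> \<infinity>" if "i \<in> I" for i
    unfolding Ent_def using ppe[OF that] pp0[of i] by (cases "Nn (p i)" rule: ennreal_cases) auto
  have Entp_ne: "ereal (a i) * Ent (p i) \<noteq> \<infinity>" if "i \<in> I" for i
    using Ent_ne[OF that] apos[OF that] by (cases "Ent (p i)") auto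
  have main: "Ent q \<le> (\<Sum>i\<in>I. ereal (a i) * Ent (p i)) \<and>
     (\<Sum>i\<in>I. ereal (a i) * Ent (p i)) + ereal (\<Sum>i\<in>I. a i * ln (a i)) \<le> Ent q"
  proof (cases "Nn q = \<infinity>")
    case True
    then have Eq: "Ent q = -\<infinity>" unfolding Ent_def using pqe pq0 by simp
    have "\<exists>i\<in>I. Nn (p i) = \<infinity>"
    proof (rule ccontr)
      assume "\<not> (\<exists>i\<in>I. Nn (p i) = \<infinity>)"
      then have A: "Pp q + (\<Sum>i\<in>I. ennreal (a i) * Nn (p i)) + (\<Sum>i\<in>I. ennreal (c i)) < \<infinity>"
        using I pqe csum by (simp add: less_top ennreal_mult_eq_top_iff ennreal_mult_less_top)
      have B: "Nn q + (\<Sum>i\<in>I. ennreal (a i) * Pp (p i)) = \<infinity>" using True by simp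
      have "\<infinity> \<le> Pp q + (\<Sum>i\<in>I. ennreal (a i) * Nn (p i)) + (\<Sum>i\<in>I. ennreal (c i))"
        by (subst B[symmetric]) (rule IL)
      with A show False by (metis not_le)
    qed
    then obtain i where i: "i \<in> I" "Nn (p i) = \<infinity>" by blast
    have "Ent (p i) = -\<infinity>" unfolding Ent_def using i ppe[OF i(1)] pp0[of i] by simp
    then have "ereal (a i) * Ent (p i) = -\<infinity>" using apos[OF i(1)] by simp
    then have "(\<Sum>i\<in>I. ereal (a i) * Ent (p i)) = -\<infinity>"
      using ereal_sum_minf[OF I i(1), of "\<lambda>i. ereal (a i) * Ent (p i)"] Entp_ne by blast
    then show ?thesis using Eq by simp
  next
    case False
    then obtain nq where nqe: "Nn q = ennreal nq" and nq0: "0 \<le> nq"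
      by (cases "Nn q" rule: ennreal_cases) auto
    have Nfin: "Nn (p i) \<noteq> \<infinity>" if "i \<in> I" for i
    proof
      assume "Nn (p i) = \<infinity>"
      then have "(\<Sum>i\<in>I. ennreal (a i) * Nn (p i)) = \<infinity>"
        using I that apos[OF that] by (auto simp: ennreal_mult_eq_top_iff)
      then have B: "Pp q + (\<Sum>i\<in>I. ennreal (a i) * Nn (p i)) = \<infinity>" by simp
      have A: "Nn q + (\<Sum>i\<in>I. ennreal (a i) * Pp (p i)) < \<infinity>"
        using I nqe ppe by (simp add: less_top ennreal_mult_eq_top_iff ennreal_mult_less_top)
      have "\<infinity> \<le> Nn q + (\<Sum>i\<in>I. ennreal (a i) * Pp (p i))"
        by (subst B[symmetric]) (rule IU)
      with A show False by (metis not_le)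
    qed
    define nn where "nn i = enn2real (Nn (p i))" for i
    have nne: "Nn (p i) = ennreal (nn i)" if "i \<in> I" for i
      using Nfin[OF that] unfolding nn_def by (simp add: ennreal_enn2real_if)
    have nn0: "0 \<le> nn i" for i by (simp add: nn_def)
    have sN: "(\<Sum>i\<in>I. ennreal (a i) * Nn (p i)) = ennreal (\<Sum>i\<in>I. a i * nn i)"
    proof -
      have "(\<Sum>i\<in>I. ennreal (a i) * Nn (p i)) = (\<Sum>i\<in>I. ennreal (a i * nn i))"
        using a0 nn0 nne by (intro sum.cong refl) (simp add: ennreal_mult)
      also have "\<dots> = ennreal (\<Sum>i\<in>I. a i * nn i)" using a0 nn0 by simp
      finally show ?thesis .
    qed
    have sP: "(\<Sum>i\<in>I. ennreal (a i) * Pp (p i)) = ennreal (\<Sum>i\<in>I. a i * pp i)"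
    proof -
      have "(\<Sum>i\<in>I. ennreal (a i) * Pp (p i)) = (\<Sum>i\<in>I. ennreal (a i * pp i))"
        using a0 pp0 ppe by (intro sum.cong refl) (simp add: ennreal_mult)
      also have "\<dots> = ennreal (\<Sum>i\<in>I. a i * pp i)" using a0 pp0 by simp
      finally show ?thesis .
    qed
    have sN0: "0 \<le> (\<Sum>i\<in>I. a i * nn i)" using a0 nn0 by (simp add: sum_nonneg)
    have sP0: "0 \<le> (\<Sum>i\<in>I. a i * pp i)" using a0 pp0 by (simp add: sum_nonneg)
    have rU: "pq + (\<Sum>i\<in>I. a i * nn i) \<le> nq + (\<Sum>i\<in>I. a i * pp i)"
      using IU unfolding sN sP pqe nqe using sN0 sP0 pq0 nq0 by (simp add: ennreal_plus[symmetric] del: ennreal_plus)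
    have rL: "nq + (\<Sum>i\<in>I. a i * pp i) \<le> pq + (\<Sum>i\<in>I. a i * nn i) + (\<Sum>i\<in>I. c i)"
      using IL unfolding sN sP pqe nqe csum using sN0 sP0 pq0 nq0 c_sum0
      by (simp add: ennreal_plus[symmetric] del: ennreal_plus)
    have Eq: "Ent q = ereal (pq - nq)" unfolding Ent_def using pqe nqe pq0 nq0 by simp
    have Ep: "(\<Sum>i\<in>I. ereal (a i) * Ent (p i)) = ereal ((\<Sum>i\<in>I. a i * pp i) - (\<Sum>i\<in>I. a i * nn i))"
    proof -
      have "(\<Sum>i\<in>I. ereal (a i) * Ent (p i)) = (\<Sum>i\<in>I. ereal (a i * pp i - a i * nn i))"
        unfolding Ent_def using ppe nne pp0 nn0 by (intro sum.cong refl) (simp add: right_diff_distrib)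
      also have "\<dots> = ereal ((\<Sum>i\<in>I. a i * pp i) - (\<Sum>i\<in>I. a i * nn i))"
        by (simp add: sum_subtractf)
      finally show ?thesis .
    qed
    show ?thesis unfolding Eq Ep clnsum using rU rL by simp
  qed
  show "Ent q \<le> (\<Sum>i\<in>I. ereal (a i) * Ent (p i))" using main by blast
  show "(\<Sum>i\<in>I. ereal (a i) * Ent (p i)) + ereal (\<Sum>i\<in>I. a i * ln (a i)) \<le> Ent q" using main by blast
qed

lemma dil_pp_fin:
  fixes g :: "real \<Rightarrow> real" and t :: real
  assumes gm[measurable]: "g \<in> borel_measurable borel" and g0: "\<And>x. 0 \<le> g x"
    and gP: "Pp g < \<infinity>" and gint: "(\<integral>\<^sup>+x. ennreal (g x) \<partial>lborel) = 1" and t: "0 < t"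
  shows "Pp (\<lambda>x. g (x / t) / t) < \<infinity>"
proof -
  have pt: "ennreal ((g y / t) * ln (g y / t)) \<le> ennreal (1/t) * ennreal (g y * ln (g y)) + ennreal (\<bar>ln t\<bar>/t) * ennreal (g y)" for y
  proof -
    have r: "(g y / t) * ln (g y / t) \<le> (1/t) * max 0 (g y * ln (g y)) + (\<bar>ln t\<bar>/t) * g y"
    proof (cases "g y = 0")
      case True then show ?thesis by simp
    next
      case False
      then have gp: "g y > 0" using g0[of y] by simp
      have "(g y / t) * ln (g y / t) = (1/t) * (g y * ln (g y)) - (1/t) * (g y * ln t)"
        using gp t by (simp add: ln_div algebra_simps)
      also have "\<dots> \<le> (1/t) * max 0 (g y * ln (g y)) + (1/t) * (g y * \<bar>ln t\<bar>)"
      proof -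
        have h1: "1/t * (g y * ln (g y)) \<le> 1/t * max 0 (g y * ln (g y))"
          using t by (intro mult_left_mono) auto
        have "g y * (- ln t) \<le> g y * \<bar>ln t\<bar>" using gp by (intro mult_left_mono) auto
        then have "1/t * (g y * (- ln t)) \<le> 1/t * (g y * \<bar>ln t\<bar>)" using t gp by (intro mult_left_mono) auto
        then show ?thesis using h1 by simp
      qed
      also have "\<dots> = (1/t) * max 0 (g y * ln (g y)) + (\<bar>ln t\<bar>/t) * g y" by simp
      finally show ?thesis .
    qed
    have "ennreal ((g y / t) * ln (g y / t)) \<le> ennreal ((1/t) * max 0 (g y * ln (g y)) + (\<bar>ln t\<bar>/t) * g y)"
      using r by (rule ennreal_leI)
    also have "\<dots> = ennreal (1/t) * ennreal (g y * ln (g y)) + ennreal (\<bar>ln t\<bar>/t) * ennreal (g y)"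
    proof -
      have e1: "ennreal ((1/t) * max 0 (g y * ln (g y))) = ennreal (1/t) * ennreal (g y * ln (g y))"
        using t by (subst ennreal_mult) (auto simp: ennreal_max_0)
      have e2: "ennreal ((\<bar>ln t\<bar>/t) * g y) = ennreal (\<bar>ln t\<bar>/t) * ennreal (g y)"
        using t g0[of y] by (intro ennreal_mult) auto
      have "ennreal ((1/t) * max 0 (g y * ln (g y)) + (\<bar>ln t\<bar>/t) * g y)
          = ennreal ((1/t) * max 0 (g y * ln (g y))) + ennreal ((\<bar>ln t\<bar>/t) * g y)"
        using t g0[of y] by (intro ennreal_plus) auto
      then show ?thesis by (simp only: e1 e2)
    qed
    finally show ?thesis .
  qed
  have "Pp (\<lambda>x. g (x / t) / t) = ennreal t * (\<integral>\<^sup>+y. ennreal ((g y / t) * ln (g y / t)) \<partial>lborel)"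
    unfolding Pp_def using nn_integral_real_affine[of "\<lambda>x. ennreal (g (x / t) / t * ln (g (x / t) / t))" t 0] t
    by simp
  also have "\<dots> \<le> ennreal t * (\<integral>\<^sup>+y. ennreal (1/t) * ennreal (g y * ln (g y)) + ennreal (\<bar>ln t\<bar>/t) * ennreal (g y) \<partial>lborel)"
    by (intro mult_left_mono nn_integral_mono pt) simp
  also have "\<dots> = ennreal t * (ennreal (1/t) * Pp g + ennreal (\<bar>ln t\<bar>/t) * 1)"
    unfolding Pp_def gint[symmetric] by (simp add: nn_integral_add nn_integral_cmult)
  also have "\<dots> < \<infinity>" using gP by (simp add: ennreal_mult_less_top less_top)
  finally show ?thesis .
qed

lemma translate_int:
  fixes h :: "real \<Rightarrow> ennreal"
  assumes [measurable]: "h \<in> borel_measurable borel"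
  shows "(\<integral>\<^sup>+z. h (z - x) \<partial>lborel) = (\<integral>\<^sup>+z. h z \<partial>lborel)"
  using nn_integral_real_affine[of h 1 "-x"] by simp

lemma conv_swap:
  fixes M :: "real measure" and h :: "real \<Rightarrow> ennreal"
  assumes M: "finite_measure M" and Ms[measurable_cong]: "sets M = sets borel" and M1: "emeasure M (space M) = 1"
    and [measurable]: "h \<in> borel_measurable borel"
  shows "(\<integral>\<^sup>+z. \<integral>\<^sup>+x. h (z - x) \<partial>M \<partial>lborel) = (\<integral>\<^sup>+z. h z \<partial>lborel)"
proof -
  interpret M: finite_measure M by fact
  interpret pair_sigma_finite M lborel
    by (simp add: M.sigma_finite_measure_axioms lborel.sigma_finite_measure_axioms pair_sigma_finite_def)
  have "case_prod (\<lambda>x z. h (z - x)) \<in> borel_measurable (M \<Otimes>\<^sub>M lborel)" by measurable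
  from Fubini'[OF this]
  have "(\<integral>\<^sup>+z. \<integral>\<^sup>+x. h (z - x) \<partial>M \<partial>lborel) = (\<integral>\<^sup>+x. \<integral>\<^sup>+z. h (z - x) \<partial>lborel \<partial>M)" .
  also have "\<dots> = (\<integral>\<^sup>+x. (\<integral>\<^sup>+z. h z \<partial>lborel) \<partial>M)"
    by (intro nn_integral_cong translate_int) simp
  also have "\<dots> = (\<integral>\<^sup>+z. h z \<partial>lborel)" using M1 by simp
  finally show ?thesis .
qed

lemma conv_pp_fin:
  fixes M :: "real measure" and f :: "real \<Rightarrow> real"
  assumes M: "finite_measure M" and Ms[measurable_cong]: "sets M = sets borel" and M1: "emeasure M (space M) = 1"
    and fm[measurable]: "f \<in> borel_measurable borel" and f0: "\<And>x. 0 \<le> f x"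
  shows "Pp (\<lambda>z. enn2real (\<integral>\<^sup>+x. ennreal (f (z - x)) \<partial>M)) \<le> Pp f"
proof -
  have pt: "ennreal (enn2real (\<integral>\<^sup>+x. ennreal (f (z - x)) \<partial>M) * ln (enn2real (\<integral>\<^sup>+x. ennreal (f (z - x)) \<partial>M)))
      \<le> (\<integral>\<^sup>+x. ennreal (f (z - x) * ln (f (z - x))) \<partial>M)" for z
  proof (cases "(\<integral>\<^sup>+x. ennreal (f (z - x)) \<partial>M) = \<infinity>")
    case True then show ?thesis by simp
  next
    case False
    then obtain v where v: "(\<integral>\<^sup>+x. ennreal (f (z - x)) \<partial>M) = ennreal v" "0 \<le> v"
      by (cases "(\<integral>\<^sup>+x. ennreal (f (z - x)) \<partial>M)" rule: ennreal_cases) auto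
    have "ennreal (v * ln v) \<le> (\<integral>\<^sup>+x. ennreal (f (z - x) * ln (f (z - x))) \<partial>M)"
      by (rule jensen_psi[OF M1 _ _ v]) (auto simp: f0)
    then show ?thesis using v by simp
  qed
  have "Pp (\<lambda>z. enn2real (\<integral>\<^sup>+x. ennreal (f (z - x)) \<partial>M)) \<le> (\<integral>\<^sup>+z. \<integral>\<^sup>+x. ennreal (f (z - x) * ln (f (z - x))) \<partial>M \<partial>lborel)"
    unfolding Pp_def by (intro nn_integral_mono pt)
  also have "\<dots> = Pp f" unfolding Pp_def
    by (rule conv_swap[OF M Ms M1, of "\<lambda>y. ennreal (f y * ln (f y))"]) measurable
  finally show ?thesis .
qed

lemma conv_mass:
  fixes M :: "real measure" and f :: "real \<Rightarrow> real"
  assumes M: "finite_measure M" and Ms[measurable_cong]: "sets M = sets borel" and M1: "emeasure M (space M) = 1"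
    and fm[measurable]: "f \<in> borel_measurable borel" and fint: "(\<integral>\<^sup>+x. ennreal (f x) \<partial>lborel) = 1"
  shows "(\<integral>\<^sup>+z. ennreal (enn2real (\<integral>\<^sup>+x. ennreal (f (z - x)) \<partial>M)) \<partial>lborel) \<le> 1"
proof -
  have "(\<integral>\<^sup>+z. ennreal (enn2real (\<integral>\<^sup>+x. ennreal (f (z - x)) \<partial>M)) \<partial>lborel) \<le> (\<integral>\<^sup>+z. \<integral>\<^sup>+x. ennreal (f (z - x)) \<partial>M \<partial>lborel)"
    by (intro nn_integral_mono) (simp add: ennreal_enn2real_if)
  also have "\<dots> = 1"
    using conv_swap[OF M Ms M1, of "\<lambda>y. ennreal (f y)"] fint by simp
  finally show ?thesis .
qed

lemma ereal_div_step:
  fixes R L :: ereal and K d e :: real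
  assumes RL: "R + ereal K \<le> L" and d: "0 < d" and e: "- K \<le> e * d"
  shows "R / ereal d \<le> L / ereal d + ereal e"
proof (cases R)
  case (real r)
  show ?thesis
  proof (cases L)
    case (real l)
    have "r + K \<le> l" using RL \<open>R = ereal r\<close> real by simp
    then have "r / d \<le> l / d + e" using d e by (simp add: field_simps)
    then show ?thesis using \<open>R = ereal r\<close> real d by simp
  next
    case PInf then show ?thesis using d by simp
  next
    case MInf then show ?thesis using RL \<open>R = ereal r\<close> by simp
  qed
next
  case PInf
  then have "L = \<infinity>" using RL by simp
  then show ?thesis using d PInf by simp
next
  case MInf then show ?thesis using d by simp
qed

lemma ereal_div_mono:
  fixes R L :: ereal and d :: real
  assumes "L \<le> R" "0 < d"
  shows "L / ereal d \<le> R / ereal d"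
  using assms by (simp add: ereal_divide_right_mono)

lemma liminf_sandwich:
  fixes L R :: "real \<Rightarrow> ereal" and K :: real
  assumes K: "K \<le> 0" and LR: "\<And>t. 0 < t \<Longrightarrow> t < 1 \<Longrightarrow> L t \<le> R t \<and> R t + ereal K \<le> L t"
  shows "Liminf (at_right 0) (\<lambda>t. L t / ereal \<bar>ln t\<bar>) = Liminf (at_right 0) (\<lambda>t. R t / ereal \<bar>ln t\<bar>)"
proof (rule antisym)
  have ev01: "eventually (\<lambda>t. 0 < t \<and> t < 1) (at_right (0::real))"
    unfolding eventually_at_right_field by (intro exI[of _ 1]) auto
  have dpos: "0 < \<bar>ln t\<bar>" if "0 < t" "t < 1" for t :: real
    using that by simp
  show "Liminf (at_right 0) (\<lambda>t. L t / ereal \<bar>ln t\<bar>) \<le> Liminf (at_right 0) (\<lambda>t. R t / ereal \<bar>ln t\<bar>)"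
    by (intro Liminf_mono eventually_mono[OF ev01]) (auto intro!: ereal_div_mono dest: LR dpos)
  show "Liminf (at_right 0) (\<lambda>t. R t / ereal \<bar>ln t\<bar>) \<le> Liminf (at_right 0) (\<lambda>t. L t / ereal \<bar>ln t\<bar>)"
  proof (rule ereal_le_epsilon2)
    fix e :: real assume e: "0 < e"
    define b where "b = exp (K / e)"
    have b: "0 < b" "b \<le> 1" unfolding b_def using K e by (auto simp: divide_nonpos_pos)
    have ev: "eventually (\<lambda>t. 0 < t \<and> t < 1 \<and> t < b) (at_right (0::real))"
      unfolding eventually_at_right_field using b by (intro exI[of _ b]) auto
    have "Liminf (at_right 0) (\<lambda>t. R t / ereal \<bar>ln t\<bar>) \<le> Liminf (at_right 0) (\<lambda>t. L t / ereal \<bar>ln t\<bar> + ereal e)"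
    proof (intro Liminf_mono eventually_mono[OF ev])
      fix t :: real assume t: "0 < t \<and> t < 1 \<and> t < b"
      have "ln t < ln b" using t b by simp
      then have "ln t < K / e" unfolding b_def by simp
      then have "- K \<le> e * \<bar>ln t\<bar>" using t e by (simp add: field_simps)
      then show "R t / ereal \<bar>ln t\<bar> \<le> L t / ereal \<bar>ln t\<bar> + ereal e"
        using LR[of t] t by (intro ereal_div_step[where K=K]) auto
    qed
    also have "\<dots> = Liminf (at_right 0) (\<lambda>t. L t / ereal \<bar>ln t\<bar>) + ereal e"
      by (rule Liminf_add_ereal_right) auto
    finally show "Liminf (at_right 0) (\<lambda>t. R t / ereal \<bar>ln t\<bar>) \<le> Liminf (at_right 0) (\<lambda>t. L t / ereal \<bar>ln t\<bar>) + ereal e" .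
  qed
qed

lemma nu_setup:
  fixes \<nu> :: "real measure"
  assumes nu_prob: "prob_space \<nu>" and nu_sets: "sets \<nu> = sets borel"
    and nu_ac: "absolutely_continuous lborel \<nu>" and nu_H: "entropy_H \<nu> < \<infinity>"
  obtains g where "g \<in> borel_measurable borel" "\<And>x. 0 \<le> g x" "\<nu> = density lborel (\<lambda>x. ennreal (g x))"
    "(\<integral>\<^sup>+x. ennreal (g x) \<partial>lborel) = 1" "Pp g < \<infinity>"
proof -
  interpret prob_space \<nu> by fact
  define g0 where "g0 = RN_deriv lborel \<nu>"
  define g where "g x = enn2real (g0 x)" for x
  have g0m[measurable]: "g0 \<in> borel_measurable borel" unfolding g0_def
    using borel_measurable_RN_deriv[of lborel \<nu>] by simp
  have gm[measurable]: "g \<in> borel_measurable borel" unfolding g_def by measurable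
  have dens: "density lborel g0 = \<nu>" unfolding g0_def
    using sigma_finite_measure.density_RN_deriv[OF lborel.sigma_finite_measure_axioms nu_ac] nu_sets by simp
  have fin: "AE x in lborel. g0 x \<noteq> \<infinity>" unfolding g0_def
    using sigma_finite_measure.RN_deriv_finite[OF lborel.sigma_finite_measure_axioms sigma_finite_measure_axioms nu_ac] nu_sets
    by simp
  have nu_eq: "\<nu> = density lborel (\<lambda>x. ennreal (g x))"
  proof -
    have "density lborel g0 = density lborel (\<lambda>x. ennreal (g x))"
      by (rule density_cong) (auto simp: g_def intro!: eventually_mono[OF fin] simp: ennreal_enn2real_if)
    then show ?thesis using dens by simp
  qed
  have gint: "(\<integral>\<^sup>+x. ennreal (g x) \<partial>lborel) = 1"
  proof -
    have "emeasure \<nu> (space \<nu>) = 1" by (rule emeasure_space_1)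
    moreover have "space \<nu> = UNIV" using sets_eq_imp_space_eq[OF nu_sets] by simp
    ultimately have "emeasure (density lborel (\<lambda>x. ennreal (g x))) UNIV = 1" using nu_eq by simp
    then show ?thesis by (simp add: emeasure_density)
  qed
  have "entropy_H \<nu> = Ent g"
    unfolding entropy_H_def Let_def Ent_def Pp_def Nn_def g_def g0_def ..
  then have "Ent g < \<infinity>" using nu_H by simp
  then have gP: "Pp g < \<infinity>"
    unfolding Ent_def by (cases "Pp g" rule: ennreal_cases; cases "Nn g" rule: ennreal_cases) auto
  show ?thesis by (rule that[OF gm _ nu_eq gint gP]) (simp add: g_def)
qed

lemma dil_setup:
  fixes \<nu> :: "real measure" and g :: "real \<Rightarrow> real" and t :: real
  assumes nu_prob: "prob_space \<nu>" and gm[measurable]: "g \<in> borel_measurable borel" and g0: "\<And>x. 0 \<le> g x"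
    and nu_eq: "\<nu> = density lborel (\<lambda>x. ennreal (g x))" and t: "0 < t"
  shows "dilate t \<nu> = density lborel (\<lambda>x. ennreal (g (x / t) / t))"
    and "prob_space (dilate t \<nu>)"
    and "(\<integral>\<^sup>+x. ennreal (g (x / t) / t) \<partial>lborel) = 1"
proof -
  have "dilate t \<nu> = density lborel (\<lambda>x. ennreal (g (x / t)) * ennreal (1/t))"
    unfolding dilate_def by (subst nu_eq) (rule dilate_density[OF _ t]; simp)
  also have "\<dots> = density lborel (\<lambda>x. ennreal (g (x / t) / t))"
    using t g0 by (simp add: ennreal_mult[symmetric] divide_inverse)
  finally show d: "dilate t \<nu> = density lborel (\<lambda>x. ennreal (g (x / t) / t))" .
  interpret prob_space \<nu> by fact
  have sp: "space \<nu> = UNIV" using nu_eq by simp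
  show p: "prob_space (dilate t \<nu>)" unfolding dilate_def
  proof (rule prob_space_distr)
    have "sets \<nu> = sets borel" using nu_eq by simp
    then have E: "measurable \<nu> borel = measurable borel borel" by (rule measurable_cong_sets) simp
    have "(*) t \<in> measurable borel (borel :: real measure)" by measurable
    then show "random_variable borel ((*) t)" unfolding E .
  qed
  have "emeasure (dilate t \<nu>) UNIV = 1"
    using prob_space.emeasure_space_1[OF p] by (simp add: dilate_def)
  then show "(\<integral>\<^sup>+x. ennreal (g (x / t) / t) \<partial>lborel) = 1"
    unfolding d by (simp add: emeasure_density)
qed

lemma pert:
  fixes n :: nat and \<mu> :: "nat \<Rightarrow> real measure" and a :: "nat \<Rightarrow> real"
    and \<nu> :: "real measure" and g :: "real \<Rightarrow> real" and t :: real
  assumes sets_mu: "\<And>i. i \<in> {1..n} \<Longrightarrow> sets (\<mu> i) = sets borel"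
    and mass: "\<And>i. i \<in> {1..n} \<Longrightarrow> emeasure (\<mu> i) UNIV = ennreal (a i)"
    and apos: "\<And>i. i \<in> {1..n} \<Longrightarrow> a i > 0"
    and asum: "(\<Sum>i\<in>{1..n}. a i) = 1"
    and nu_prob: "prob_space \<nu>"
    and gm[measurable]: "g \<in> borel_measurable borel" and g0: "\<And>x. 0 \<le> g x"
    and nu_eq: "\<nu> = density lborel (\<lambda>x. ennreal (g x))"
    and gint: "(\<integral>\<^sup>+x. ennreal (g x) \<partial>lborel) = 1" and gP: "Pp g < \<infinity>"
    and t: "0 < t"
  shows "entropy_H (sum_meas \<mu> {1..n} \<star> dilate t \<nu>)
           \<le> (\<Sum>i\<in>{1..n}. ereal (a i) * entropy_H (scale_measure (ennreal (1 / a i)) (\<mu> i) \<star> dilate t \<nu>))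
       \<and> (\<Sum>i\<in>{1..n}. ereal (a i) * entropy_H (scale_measure (ennreal (1 / a i)) (\<mu> i) \<star> dilate t \<nu>))
           + ereal (\<Sum>i\<in>{1..n}. a i * ln (a i))
           \<le> entropy_H (sum_meas \<mu> {1..n} \<star> dilate t \<nu>)"
proof -
  define I where "I = {1..n::nat}"
  have I: "finite I" unfolding I_def by simp
  define f where "f x = g (x / t) / t" for x
  have fm[measurable]: "f \<in> borel_measurable borel" unfolding f_def by measurable
  have f0: "0 \<le> f x" for x unfolding f_def using g0[of "x/t"] t by simp
  have dil: "dilate t \<nu> = density lborel (\<lambda>x. ennreal (f x))"
    and pdil: "prob_space (dilate t \<nu>)" and fint: "(\<integral>\<^sup>+x. ennreal (f x) \<partial>lborel) = 1"
    using dil_setup[OF nu_prob gm g0 nu_eq t] unfolding f_def by auto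
  have fP: "Pp f < \<infinity>" unfolding f_def by (rule dil_pp_fin[OF gm g0 gP gint t])
  have findil: "finite_measure (density lborel (\<lambda>x. ennreal (f x)))"
  proof -
    interpret D: prob_space "dilate t \<nu>" by (rule pdil)
    show ?thesis using D.finite_measure_axioms dil by simp
  qed
  have spmu: "space (\<mu> i) = UNIV" if "i \<in> I" for i
    using sets_eq_imp_space_eq[OF sets_mu[OF that[unfolded I_def]]] by simp
  define Mi where "Mi i = scale_measure (ennreal (1 / a i)) (\<mu> i)" for i
  have Mi_sets: "sets (Mi i) = sets borel" if "i \<in> I" for i
    using sets_mu that unfolding Mi_def I_def by simp
  have Mi_sp: "space (Mi i) = UNIV" if "i \<in> I" for i
    using spmu[OF that] unfolding Mi_def by (simp add: space_scale_measure)
  have Mi1: "emeasure (Mi i) (space (Mi i)) = 1" if "i \<in> I" for i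
  proof -
    have "emeasure (Mi i) (space (Mi i)) = ennreal (1 / a i) * ennreal (a i)"
      using Mi_sp[OF that] mass[OF that[unfolded I_def]] unfolding Mi_def by simp
    also have "\<dots> = ennreal (1 / a i * a i)" using apos[OF that[unfolded I_def]] by (intro ennreal_mult[symmetric]) auto
    also have "\<dots> = 1" using apos[OF that[unfolded I_def]] by simp
    finally show ?thesis .
  qed
  have Mi_fin: "finite_measure (Mi i)" if "i \<in> I" for i
    by (rule finite_measureI) (simp add: Mi1[OF that])
  have intm: "(\<lambda>z. \<integral>\<^sup>+x. ennreal (f (z - x)) \<partial>Mi i) \<in> borel_measurable borel" if "i \<in> I" for i
  proof -
    interpret finite_measure "Mi i" by (rule Mi_fin[OF that])
    note [measurable_cong] = Mi_sets[OF that]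
    show ?thesis by measurable
  qed
  have conv_i: "Mi i \<star> dilate t \<nu> = density lborel (\<lambda>z. \<integral>\<^sup>+x. ennreal (f (z - x)) \<partial>Mi i)" if "i \<in> I" for i
    unfolding dil by (rule conv_density[OF Mi_fin[OF that] Mi_sets[OF that] _ findil]) simp
  define p where "p i z = enn2real (\<integral>\<^sup>+x. ennreal (f (z - x)) \<partial>Mi i)" for i z
  have Hi: "entropy_H (Mi i \<star> dilate t \<nu>) = Ent (p i)" if "i \<in> I" for i
    unfolding conv_i[OF that] p_def by (rule entropy_density[OF intm[OF that]])
  have pm: "p i \<in> borel_measurable borel" if "i \<in> I" for i
    unfolding p_def using intm[OF that] by measurable
  have p0: "0 \<le> p i z" for i z by (simp add: p_def)
  have pfin: "Pp (p i) < \<infinity>" if "i \<in> I" for i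
    unfolding p_def by (rule le_less_trans[OF conv_pp_fin[OF Mi_fin[OF that] Mi_sets[OF that] Mi1[OF that] fm f0] fP])
  have pint: "(\<integral>\<^sup>+z. ennreal (p i z) \<partial>lborel) \<le> 1" if "i \<in> I" for i
    unfolding p_def by (rule conv_mass[OF Mi_fin[OF that] Mi_sets[OF that] Mi1[OF that] fm fint])
  define S where "S = sum_meas \<mu> I"
  have S_sets: "sets S = sets borel" unfolding S_def by simp
  have S_sp: "space S = UNIV" unfolding S_def by simp
  have muI_sets: "\<And>i. i \<in> I \<Longrightarrow> sets (\<mu> i) = sets borel" using sets_mu unfolding I_def by simp
  have S1: "emeasure S (space S) = 1"
  proof -
    have "emeasure S (space S) = (\<Sum>i\<in>I. emeasure (\<mu> i) UNIV)"
      unfolding S_def sum_meas_space by (rule sum_meas_emeasure[OF I muI_sets]) simp_all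
    also have "\<dots> = (\<Sum>i\<in>I. ennreal (a i))" using mass unfolding I_def by simp
    also have "\<dots> = ennreal (\<Sum>i\<in>I. a i)" using apos unfolding I_def by (intro sum_ennreal) (simp add: less_imp_le)
    also have "\<dots> = 1" using asum unfolding I_def by simp
    finally show ?thesis .
  qed
  have S_fin: "finite_measure S" by (rule finite_measureI) (simp add: S1)
  have intmS: "(\<lambda>z. \<integral>\<^sup>+x. ennreal (f (z - x)) \<partial>S) \<in> borel_measurable borel"
  proof -
    interpret finite_measure S by (rule S_fin)
    note [measurable_cong] = S_sets
    show ?thesis by measurable
  qed
  have conv_S: "S \<star> dilate t \<nu> = density lborel (\<lambda>z. \<integral>\<^sup>+x. ennreal (f (z - x)) \<partial>S)"
    unfolding dil by (rule conv_density[OF S_fin S_sets _ findil]) simp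
  define q where "q z = enn2real (\<integral>\<^sup>+x. ennreal (f (z - x)) \<partial>S)" for z
  have HS: "entropy_H (S \<star> dilate t \<nu>) = Ent q"
    unfolding conv_S q_def by (rule entropy_density[OF intmS])
  have qm: "q \<in> borel_measurable borel" unfolding q_def using intmS by measurable
  have AEfin: "AE z in lborel. \<forall>i\<in>I. (\<integral>\<^sup>+x. ennreal (f (z - x)) \<partial>Mi i) \<noteq> \<infinity>"
  proof (rule AE_finite_allI[OF I])
    fix i assume i: "i \<in> I"
    have "(\<integral>\<^sup>+z. \<integral>\<^sup>+x. ennreal (f (z - x)) \<partial>Mi i \<partial>lborel) = 1"
      using conv_swap[OF Mi_fin[OF i] Mi_sets[OF i] Mi1[OF i], of "\<lambda>y. ennreal (f y)"] fint by simp
    then show "AE z in lborel. (\<integral>\<^sup>+x. ennreal (f (z - x)) \<partial>Mi i) \<noteq> \<infinity>"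
      by (intro nn_integral_PInf_AE) (use intm[OF i] in simp_all)
  qed
  have qeq: "AE z in lborel. q z = (\<Sum>i\<in>I. a i * p i z)"
    using AEfin
  proof eventually_elim
    case (elim z)
    have hm: "(\<lambda>x. ennreal (f (z - x))) \<in> borel_measurable borel" by measurable
    have hmi: "(\<lambda>x. ennreal (f (z - x))) \<in> borel_measurable (\<mu> i)" if "i \<in> I" for i
    proof -
      have E: "borel_measurable (\<mu> i) = (borel_measurable borel :: (real \<Rightarrow> ennreal) set)"
        by (rule measurable_cong_sets) (simp_all add: muI_sets that)
      show ?thesis unfolding E by (rule hm)
    qed
    define Q where "Q i = (\<integral>\<^sup>+x. ennreal (f (z - x)) \<partial>\<mu> i)" for i
    have MQ: "(\<integral>\<^sup>+x. ennreal (f (z - x)) \<partial>Mi i) = ennreal (1 / a i) * Q i" if "i \<in> I" for i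
      unfolding Mi_def Q_def by (rule nn_integral_scale_measure[OF hmi[OF that]])
    have Qfin: "Q i < \<infinity>" if "i \<in> I" for i
    proof -
      have "ennreal (1 / a i) * Q i \<noteq> \<infinity>" using elim that MQ[OF that] by metis
      moreover have "ennreal (1 / a i) \<noteq> 0" using apos[OF that[unfolded I_def]] by simp
      ultimately show ?thesis by (simp add: ennreal_mult_eq_top_iff less_top)
    qed
    have "q z = enn2real (\<Sum>i\<in>I. Q i)"
      unfolding q_def S_def Q_def using nn_integral_sum_meas[OF I muI_sets hm] by simp
    also have "\<dots> = (\<Sum>i\<in>I. enn2real (Q i))" using Qfin by (subst enn2real_sum) auto
    also have "\<dots> = (\<Sum>i\<in>I. a i * p i z)"
    proof (intro sum.cong refl)
      fix i assume i: "i \<in> I"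
      have "a i * p i z = a i * (enn2real (ennreal (1 / a i)) * enn2real (Q i))"
        unfolding p_def MQ[OF i] enn2real_mult ..
      also have "\<dots> = enn2real (Q i)" using apos[OF i[unfolded I_def]] by simp
      finally show "enn2real (Q i) = a i * p i z" by simp
    qed
    finally show ?case .
  qed
  have apos': "\<And>i. i \<in> I \<Longrightarrow> 0 < a i" using apos unfolding I_def by simp
  have asum': "(\<Sum>i\<in>I. a i) = 1" using asum unfolding I_def by simp
  note mx = mix[OF I apos' asum' pm p0 qm qeq pint pfin]
  have HH: "(\<Sum>i\<in>I. ereal (a i) * entropy_H (scale_measure (ennreal (1 / a i)) (\<mu> i) \<star> dilate t \<nu>))
      = (\<Sum>i\<in>I. ereal (a i) * Ent (p i))"
    by (intro sum.cong refl) (simp add: Hi[unfolded Mi_def])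
  show ?thesis using mx HH HS unfolding S_def I_def by simp
qed

theorem lemma2p2:
  fixes n :: nat and \<mu> :: "nat \<Rightarrow> real measure" and a :: "nat \<Rightarrow> real"
    and \<nu> :: "real measure"
  assumes sets_mu: "\<And>i. i \<in> {1..n} \<Longrightarrow> sets (\<mu> i) = sets borel"
    and mass: "\<And>i. i \<in> {1..n} \<Longrightarrow> emeasure (\<mu> i) UNIV = ennreal (a i)"
    and apos: "\<And>i. i \<in> {1..n} \<Longrightarrow> a i > 0"
    and asum: "(\<Sum>i\<in>{1..n}. a i) = 1"
    and nu_prob: "prob_space \<nu>"
    and nu_sets: "sets \<nu> = sets borel"
    and nu_ac: "absolutely_continuous lborel \<nu>"
    and nu_H: "entropy_H \<nu> < \<infinity>"
  shows "Liminf (at_right 0)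
           (\<lambda>t. entropy_H (sum_meas \<mu> {1..n} \<star> dilate t \<nu>) / ereal \<bar>ln t\<bar>)
       = Liminf (at_right 0)
           (\<lambda>t. (\<Sum>i\<in>{1..n}. ereal (a i) *
                  entropy_H (scale_measure (ennreal (1 / a i)) (\<mu> i) \<star> dilate t \<nu>))
                / ereal \<bar>ln t\<bar>)"
proof -
  obtain g where g: "g \<in> borel_measurable borel" "\<And>x. 0 \<le> g x" "\<nu> = density lborel (\<lambda>x. ennreal (g x))"
    "(\<integral>\<^sup>+x. ennreal (g x) \<partial>lborel) = 1" "Pp g < \<infinity>"
    using nu_setup[OF nu_prob nu_sets nu_ac nu_H] by blast
  have K: "(\<Sum>i\<in>{1..n}. a i * ln (a i)) \<le> 0"
  proof (intro sum_nonpos)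
    fix i assume i: "i \<in> {1..n}"
    have "a i \<le> (\<Sum>i\<in>{1..n}. a i)" using i apos by (intro member_le_sum) (auto intro: less_imp_le)
    then have "a i \<le> 1" using asum by simp
    then have "ln (a i) \<le> 0" using apos[OF i] by simp
    then show "a i * ln (a i) \<le> 0" using apos[OF i] by (simp add: mult_nonneg_nonpos)
  qed
  show ?thesis
    by (rule liminf_sandwich[OF K, where L="\<lambda>t. entropy_H (sum_meas \<mu> {1..n} \<star> dilate t \<nu>)"
          and R="\<lambda>t. \<Sum>i\<in>{1..n}. ereal (a i) * entropy_H (scale_measure (ennreal (1 / a i)) (\<mu> i) \<star> dilate t \<nu>)"])
       (rule pert[OF sets_mu mass apos asum nu_prob g]; simp)
qed

end
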